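(* Let $0<p<1$, let $u_1,\dots,u_4,v_1,\dots,v_4$ be real numbers with $u_r>0$ and $|v_r|<u_r+\tfrac12$ for $r=1,2$, let $\textsc{m}\in\mathbb{N}$, and put $\alpha=\pi/(u_1+u_2+\textsc{m})$. Then for every $k\in\{1,\dots,\textsc{m}\}$ the numbers $$a_k=\prod_{r=1}^4\frac{[u_1-u_r+k]_r\,[u_1-v_r-\frac12+k]_r}{[u_1+k]_r\,[u_1-\frac12+k]_r},\qquad \tilde a_k=\prod_{r=1}^4\frac{[u_2-u_{\pi_2(r)}+k]_r\,[u_2-v_{\pi_2(r)}-\frac12+k]_r}{[u_2+k]_r\,[u_2-\frac12+k]_r}$$ are (well defined and) strictly positive.
   Context: Jacobi theta functions with nome $0<p<1$: $\theta_1(z)=2p^{1/4}\sin z\prod_{n\ge1}(1-p^{2n})(1-2p^{2n}\cos 2z+p^{4n})$, $\theta_2(z)=2p^{1/4}\cos z\prod_{n\ge1}(1-p^{2n})(1+2p^{2n}\cos 2z+p^{4n})$, $\theta_3(z)=\prod_{n\ge1}(1-p^{2n})(1+2p^{2n-1}\cos 2z+p^{4n-2})$, $\theta_4(z)=\prod_{n\ge1}(1-p^{2n})(1-2p^{2n-1}\cos 2z+p^{4n-2})$. Rescaled theta functions: $[z]_1=\theta_1(\frac{\alpha}{2}z)/(\frac{\alpha}{2}\theta_1'(0))$ and $[z]_r=\theta_r(\frac{\alpha}{2}z)/\theta_r(0)$ for $r=2,3,4$. The permutation $\pi_2\in S_4$ is $\pi_2=(12)(34)$. *)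

theory Defs
  imports "HOL-Analysis.Analysis"
begin

text \<open>Jacobi theta functions with nome p (0<p<1), as infinite products over n \<ge> 1
  (the product index m = n - 1 runs over nat).\<close>

definition theta1 :: "real \<Rightarrow> real \<Rightarrow> real" where
  "theta1 p z = 2 * p powr (1/4) * sin z *
     (\<Prod>m. (1 - p ^ (2 * Suc m)) * (1 - 2 * p ^ (2 * Suc m) * cos (2 * z) + p ^ (4 * Suc m)))"

definition theta2 :: "real \<Rightarrow> real \<Rightarrow> real" where
  "theta2 p z = 2 * p powr (1/4) * cos z *
     (\<Prod>m. (1 - p ^ (2 * Suc m)) * (1 + 2 * p ^ (2 * Suc m) * cos (2 * z) + p ^ (4 * Suc m)))"

definition theta3 :: "real \<Rightarrow> real \<Rightarrow> real" where
  "theta3 p z =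
     (\<Prod>m. (1 - p ^ (2 * Suc m)) * (1 + 2 * p ^ (2 * Suc m - 1) * cos (2 * z) + p ^ (4 * Suc m - 2)))"

definition theta4 :: "real \<Rightarrow> real \<Rightarrow> real" where
  "theta4 p z =
     (\<Prod>m. (1 - p ^ (2 * Suc m)) * (1 - 2 * p ^ (2 * Suc m - 1) * cos (2 * z) + p ^ (4 * Suc m - 2)))"

definition rtheta :: "real \<Rightarrow> real \<Rightarrow> nat \<Rightarrow> real \<Rightarrow> real" where
  "rtheta p \<alpha> r z =
     (if r = 1 then theta1 p (\<alpha> / 2 * z) / (\<alpha> / 2 * deriv (theta1 p) 0)
      else if r = 2 then theta2 p (\<alpha> / 2 * z) / theta2 p 0
      else if r = 3 then theta3 p (\<alpha> / 2 * z) / theta3 p 0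
      else theta4 p (\<alpha> / 2 * z) / theta4 p 0)"

definition pi2 :: "nat \<Rightarrow> nat" where
  "pi2 r = (if r = 1 then 2 else if r = 2 then 1 else if r = 3 then 4 else if r = 4 then 3 else r)"

end

theory Submission imports Defs begin

lemma fac_pos:
  fixes p g :: real
  assumes "0 < p" "p < 1" "Suc m \<le> a" "\<bar>g\<bar> \<le> 1"
  shows "(1 - p^(2*Suc m))*(1 + 2*p^a*g + p^(2*a)) > 0"
proof -
  have q: "p^(2*Suc m) < 1" using assms power_strict_decreasing[of 0 "2*Suc m" p] by auto
  have r0: "0 < p^a" "p^a < 1" using assms power_strict_decreasing[of 0 a p] by auto
  have g: "-1 \<le> g" using assms(4) by linarith
  have "p^a * (-1) \<le> p^a*g" using r0 g by (intro mult_left_mono) auto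
  then have "(1 - p^a)^2 \<le> 1 + 2*p^a*g + p^(2*a)"
    by (simp add: power2_eq_square power_mult algebra_simps)
  moreover have "(1 - p^a)^2 > 0" using r0 by simp
  ultimately have "1 + 2*p^a*g + p^(2*a) > 0" by linarith
  moreover have "1 - p^(2*Suc m) > 0" using q by linarith
  ultimately show ?thesis by (intro mult_pos_pos)
qed

lemma fac_bound:
  fixes p g :: real
  assumes "0 < p" "p < 1" "Suc m \<le> a" "\<bar>g\<bar> \<le> 1"
  shows "\<bar>(1 - p^(2*Suc m))*(1 + 2*p^a*g + p^(2*a)) - 1\<bar> \<le> 7 * p^(Suc m)"
proof -
  define q where "q = p^(2*Suc m)"
  define r where "r = p^a"
  define t where "t = p^Suc m"
  have q: "0 \<le> q" "q \<le> t" unfolding q_def t_def using assms power_decreasing[of "Suc m" "2*Suc m" p] by auto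
  have r: "0 \<le> r" "r \<le> t" unfolding r_def t_def using assms power_decreasing[of "Suc m" a p] by auto
  have t: "t \<le> 1" unfolding t_def using assms power_le_one[of p "Suc m"] by linarith
  have r2: "p^(2*a) = r*r" unfolding r_def by (simp add: power_mult power2_eq_square mult.commute)
  have rg: "\<bar>r*g\<bar> \<le> r" using r assms(4) by (simp add: abs_mult mult_left_le)
  have e: "(1 - q)*(1 + 2*r*g + r*r) - 1 = 2*(r*g) + r*r - q - 2*(q*(r*g)) - q*r*r" by algebra
  have rr: "r*r \<le> t" using r t by (metis mult_mono' mult_le_one order_trans mult_left_le)
  have qr: "\<bar>q*(r*g)\<bar> \<le> t" using q r t rg
    by (metis abs_mult abs_of_nonneg mult_mono' abs_ge_zero order_trans mult_left_le)
  have qrr: "q*r*r \<le> t" using q r t rr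
    by (metis mult.assoc mult_mono' mult_nonneg_nonneg mult_left_le order_trans)
  have qrr0: "0 \<le> q*r*r" using q r by simp
  have "\<bar>2*(r*g) + r*r - q - 2*(q*(r*g)) - q*r*r\<bar> \<le> 7*t"
    using rg q r rr qr qrr qrr0 mult_nonneg_nonneg[OF r(1) r(1)] unfolding abs_le_iff by linarith
  then show ?thesis using e r2 unfolding q_def r_def t_def by simp
qed

lemma summable_7: "0 < p \<Longrightarrow> p < (1::real) \<Longrightarrow> summable (\<lambda>m. 7 * p^Suc m)"
  by (intro summable_mult) (simp add: summable_geometric)

lemma conv_pos:
  fixes p :: real and a :: "nat \<Rightarrow> nat" and g :: "nat \<Rightarrow> real"
  assumes "0 < p" "p < 1" "\<And>m. Suc m \<le> a m" "\<And>m. \<bar>g m\<bar> \<le> 1"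
  shows "convergent_prod (\<lambda>m. (1 - p^(2*Suc m))*(1 + 2*p^(a m)*g m + p^(2*a m)))"
    and "(\<Prod>m. (1 - p^(2*Suc m))*(1 + 2*p^(a m)*g m + p^(2*a m))) > 0"
proof -
  have "summable (\<lambda>m. norm ((1 - p^(2*Suc m))*(1 + 2*p^(a m)*g m + p^(2*a m)) - 1))"
    by (rule summable_comparison_test'[OF summable_7[OF assms(1,2)], of 0])
       (use fac_bound[OF assms(1,2) assms(3) assms(4)] in auto)
  then show c: "convergent_prod (\<lambda>m. (1 - p^(2*Suc m))*(1 + 2*p^(a m)*g m + p^(2*a m)))"
    by (intro abs_convergent_prod_imp_convergent_prod summable_imp_abs_convergent_prod)
  show "(\<Prod>m. (1 - p^(2*Suc m))*(1 + 2*p^(a m)*g m + p^(2*a m))) > 0"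
    by (rule less_0_prodinf[OF c]) (use fac_pos[OF assms(1,2) assms(3) assms(4)] in auto)
qed

lemma prod_cont:
  fixes p :: real and a :: "nat \<Rightarrow> nat" and G :: "real \<Rightarrow> real"
  assumes "0 < p" "p < 1" "\<And>m. Suc m \<le> a m" "\<And>z. \<bar>G z\<bar> \<le> 1" "continuous_on UNIV G"
  shows "isCont (\<lambda>z. \<Prod>m. (1 - p^(2*Suc m))*(1 + 2*p^(a m)*G z + p^(2*a m))) x"
proof -
  define f where "f = (\<lambda>m z. (1 - p^(2*Suc m))*(1 + 2*p^(a m)*G z + p^(2*a m)))"
  define A where "A = cball x (1::real)"
  have cont: "continuous_on A (f n)" for n
    unfolding f_def using continuous_on_subset[OF assms(5)]
    by (auto intro!: continuous_intros)
  have "uniformly_convergent_on A (\<lambda>N z. \<Sum>n<N. norm (f n z - 1))"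
    by (rule Weierstrass_m_test'[OF _ summable_7[OF assms(1,2)]])
       (use fac_bound[OF assms(1,2) assms(3) assms(4)] in \<open>auto simp: f_def\<close>)
  then have "uniformly_convergent_on A (\<lambda>N z. \<Prod>n<N. f n z)"
    by (intro uniformly_convergent_on_prod' cont) (auto simp: A_def)
  then have ul: "uniform_limit A (\<lambda>N z. \<Prod>n<N. f n z) (\<lambda>z. lim (\<lambda>N. \<Prod>n<N. f n z)) sequentially"
    using uniformly_convergent_uniform_limit_iff by blast
  have eq: "lim (\<lambda>N. \<Prod>n<N. f n z) = (\<Prod>n. f n z)" for z
    unfolding f_def
  proof (rule prodinf_eq_lim'[symmetric])
    show "convergent_prod (\<lambda>n. (1 - p^(2*Suc n))*(1 + 2*p^(a n)*G z + p^(2*a n)))"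
      using conv_pos(1)[OF assms(1,2) assms(3), of "\<lambda>_. G z"] assms(4) by blast
    show "(1 - p^(2*Suc n))*(1 + 2*p^(a n)*G z + p^(2*a n)) \<noteq> 0" for n
      using fac_pos[OF assms(1,2) assms(3) assms(4), of n z] by linarith
  qed
  have "continuous_on A (\<lambda>z. lim (\<lambda>N. \<Prod>n<N. f n z))"
    by (rule uniform_limit_theorem[OF _ ul]) (auto intro!: always_eventually continuous_on_prod cont)
  then have "continuous_on A (\<lambda>z. \<Prod>n. f n z)" using eq by simp
  then have "isCont (\<lambda>z. \<Prod>n. f n z) x"
    by (rule continuous_on_interior) (auto simp: A_def)
  then show ?thesis by (simp add: f_def)
qed

definition P1 :: "real \<Rightarrow> real \<Rightarrow> real" where
  "P1 p z = (\<Prod>m. (1 - p^(2*Suc m))*(1 + 2*p^(2*Suc m)*(- cos (2*z)) + p^(2*(2*Suc m))))"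

lemma theta1_eq: "theta1 p z = 2 * p powr (1/4) * sin z * P1 p z"
proof -
  have "\<And>m. (4::nat) * Suc m = 2*(2*Suc m)" by simp
  then show ?thesis unfolding theta1_def P1_def by (simp only: mult_minus_right diff_conv_add_uminus)
qed

lemma P1_pos: "0 < p \<Longrightarrow> p < 1 \<Longrightarrow> P1 p z > 0"
  unfolding P1_def by (rule conv_pos(2)[where a="\<lambda>m. 2*Suc m"]) auto

lemma P1_cont: "0 < p \<Longrightarrow> p < 1 \<Longrightarrow> isCont (P1 p) x"
proof -
  assume "0 < p" "p < 1"
  then have "isCont (\<lambda>z. \<Prod>m. (1 - p^(2*Suc m))*(1 + 2*p^(2*Suc m)*(- cos (2*z)) + p^(2*(2*Suc m)))) x"
    by (rule prod_cont[where a="\<lambda>m. 2*Suc m" and G="\<lambda>z. - cos (2*z)"])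
       (auto intro!: continuous_intros)
  then show ?thesis unfolding P1_def[abs_def] .
qed

lemma theta1_pos: "0 < p \<Longrightarrow> p < 1 \<Longrightarrow> sin z > 0 \<Longrightarrow> theta1 p z > 0"
  unfolding theta1_eq using P1_pos by simp

lemma theta2_pos: assumes "0 < p" "p < 1" "cos z > 0" shows "theta2 p z > 0"
proof -
  have "\<And>m. (4::nat) * Suc m = 2*(2*Suc m)" by simp
  then have e: "theta2 p z = 2 * p powr (1/4) * cos z *
     (\<Prod>m. (1 - p^(2*Suc m))*(1 + 2*p^(2*Suc m)*(cos (2*z)) + p^(2*(2*Suc m))))"
    unfolding theta2_def by (simp only:)
  have "(\<Prod>m. (1 - p^(2*Suc m))*(1 + 2*p^(2*Suc m)*(cos (2*z)) + p^(2*(2*Suc m)))) > 0"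
    by (rule conv_pos(2)[where a="\<lambda>m. 2*Suc m"]) (use assms in auto)
  then show ?thesis unfolding e using assms by simp
qed

lemma theta3_pos: assumes "0 < p" "p < 1" shows "theta3 p z > 0"
proof -
  have "\<And>m. (4::nat) * Suc m - 2 = 2*(2*Suc m - 1)" by simp
  then have e: "theta3 p z =
     (\<Prod>m. (1 - p^(2*Suc m))*(1 + 2*p^(2*Suc m - 1)*(cos (2*z)) + p^(2*(2*Suc m - 1))))"
    unfolding theta3_def by simp
  show ?thesis unfolding e
    by (rule conv_pos(2)[where a="\<lambda>m. 2*Suc m - 1"]) (use assms in auto)
qed

lemma theta4_pos: assumes "0 < p" "p < 1" shows "theta4 p z > 0"
proof -
  have "\<And>m. (4::nat) * Suc m - 2 = 2*(2*Suc m - 1)" by simp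
  then have e: "theta4 p z =
     (\<Prod>m. (1 - p^(2*Suc m))*(1 + 2*p^(2*Suc m - 1)*(- cos (2*z)) + p^(2*(2*Suc m - 1))))"
    unfolding theta4_def by (simp only: mult_minus_right diff_conv_add_uminus)
  show ?thesis unfolding e
    by (rule conv_pos(2)[where a="\<lambda>m. 2*Suc m - 1"]) (use assms in auto)
qed

lemma theta1_deriv: assumes "0 < p" "p < 1" shows "deriv (theta1 p) 0 > 0"
proof -
  define K where "K = 2 * p powr (1/4)"
  have s: "((\<lambda>y. (sin y - sin 0) / (y - 0)) \<longlongrightarrow> cos 0) (at (0::real))"
    using DERIV_sin[of 0] unfolding has_field_derivative_iff .
  have c: "(P1 p \<longlongrightarrow> P1 p 0) (at 0)"
    using P1_cont[OF assms] by (simp add: isCont_def)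
  have "((\<lambda>y. K * ((sin y - sin 0) / (y - 0)) * P1 p y) \<longlongrightarrow> K * cos 0 * P1 p 0) (at 0)"
    by (intro tendsto_mult tendsto_const s c)
  moreover have "(\<lambda>y. K * ((sin y - sin 0) / (y - 0)) * P1 p y) = (\<lambda>y. (theta1 p y - theta1 p 0) / (y - 0))"
    by (simp add: theta1_eq K_def)
  ultimately have "(theta1 p has_field_derivative K * P1 p 0) (at 0)"
    unfolding has_field_derivative_iff by simp
  then have "deriv (theta1 p) 0 = K * P1 p 0" by (rule DERIV_imp_deriv)
  then show ?thesis using P1_pos[OF assms] assms by (simp add: K_def)
qed

lemma rt_pos:
  fixes p S \<alpha> z :: real
  assumes "0 < p" "p < 1" "0 < S" "\<alpha> = pi / S"
    and "r = 1 \<Longrightarrow> 0 < z \<and> z < 2*S" and "r = 2 \<Longrightarrow> \<bar>z\<bar> < S"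
  shows "rtheta p \<alpha> r z > 0"
proof -
  have a: "\<alpha> > 0" using assms by simp
  have az: "\<alpha>/2*z = pi * (z / (2*S))" using assms by (simp add: field_simps)
  show ?thesis
  proof (cases "r = 1")
    case True
    have z: "0 < z / (2*S)" "z / (2*S) < 1" using assms(3) assms(5)[OF True] by (auto simp: field_simps)
    have "0 < pi * (z / (2*S))" using z pi_gt_zero by (intro mult_pos_pos)
    moreover have "pi * (z / (2*S)) < pi * 1" using z pi_gt_zero by (intro mult_strict_left_mono)
    ultimately have "sin (\<alpha>/2*z) > 0" unfolding az by (intro sin_gt_zero) auto
    then show ?thesis using True theta1_pos[OF assms(1,2)] theta1_deriv[OF assms(1,2)] a
      by (simp add: rtheta_def)
  next
    case n1: False
    show ?thesis
    proof (cases "r = 2")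
      case True
      have z: "-1 < z / S" "z / S < 1" using assms(3) assms(6)[OF True] by (auto simp: field_simps abs_less_iff)
      have az': "\<alpha>/2*z = pi/2 * (z/S)" using assms by (simp add: field_simps)
      have "pi/2 * (-1) < pi/2 * (z/S)" using z pi_gt_zero by (intro mult_strict_left_mono) auto
      moreover have "pi/2 * (z / S) < pi/2 * 1" using z pi_gt_zero by (intro mult_strict_left_mono) auto
      ultimately have "cos (\<alpha>/2*z) > 0" unfolding az' by (intro cos_gt_zero_pi) auto
      then show ?thesis using True n1 theta2_pos[OF assms(1,2)] by (simp add: rtheta_def)
    next
      case False
      then show ?thesis using n1 theta3_pos[OF assms(1,2)] theta4_pos[OF assms(1,2)]
        by (simp add: rtheta_def)
    qed
  qed
qed

lemma r14: "r \<in> {1..4::nat} \<Longrightarrow> r = 1 \<or> r = 2 \<or> r = 3 \<or> r = 4" by auto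

theorem mainTheorem1:
  fixes p :: real and u v :: "nat \<Rightarrow> real" and M :: nat and \<alpha> :: real
  assumes "0 < p" "p < 1"
    and "\<forall>r\<in>{1,2}. u r > 0 \<and> \<bar>v r\<bar> < u r + 1/2"
    and "\<alpha> = pi / (u 1 + u 2 + real M)"
  shows "\<forall>k\<in>{1..M}.
    (\<forall>r\<in>{1..4::nat}. rtheta p \<alpha> r (u 1 + real k) \<noteq> 0 \<and> rtheta p \<alpha> r (u 1 - 1/2 + real k) \<noteq> 0
                        \<and> rtheta p \<alpha> r (u 2 + real k) \<noteq> 0 \<and> rtheta p \<alpha> r (u 2 - 1/2 + real k) \<noteq> 0) \<and>
    (\<Prod>r\<in>{1..4::nat}. (rtheta p \<alpha> r (u 1 - u r + real k) * rtheta p \<alpha> r (u 1 - v r - 1/2 + real k))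
                      / (rtheta p \<alpha> r (u 1 + real k) * rtheta p \<alpha> r (u 1 - 1/2 + real k))) > 0 \<and>
    (\<Prod>r\<in>{1..4::nat}. (rtheta p \<alpha> r (u 2 - u (pi2 r) + real k) * rtheta p \<alpha> r (u 2 - v (pi2 r) - 1/2 + real k))
                      / (rtheta p \<alpha> r (u 2 + real k) * rtheta p \<alpha> r (u 2 - 1/2 + real k))) > 0"
proof
  fix k assume k: "k \<in> {1..M}"
  define S where "S = u 1 + u 2 + real M"
  have u1: "u 1 > 0" "\<bar>v 1\<bar> < u 1 + 1/2" and u2: "u 2 > 0" "\<bar>v 2\<bar> < u 2 + 1/2" using assms(3) by auto
  have kk: "1 \<le> real k" "real k \<le> real M" using k by auto
  have S: "0 < S" using u1 u2 by (simp add: S_def)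
  have al: "\<alpha> = pi / S" using assms(4) S_def by simp
  note P = rt_pos[OF assms(1,2) S al]
  have A: "rtheta p \<alpha> r (u 1 + real k) > 0" "rtheta p \<alpha> r (u 1 - 1/2 + real k) > 0"
          "rtheta p \<alpha> r (u 2 + real k) > 0" "rtheta p \<alpha> r (u 2 - 1/2 + real k) > 0" for r
    by (rule P; use u1 u2 kk in \<open>simp add: S_def\<close>)+
  show "(\<forall>r\<in>{1..4::nat}. rtheta p \<alpha> r (u 1 + real k) \<noteq> 0 \<and> rtheta p \<alpha> r (u 1 - 1/2 + real k) \<noteq> 0
                        \<and> rtheta p \<alpha> r (u 2 + real k) \<noteq> 0 \<and> rtheta p \<alpha> r (u 2 - 1/2 + real k) \<noteq> 0) \<and>
    (\<Prod>r\<in>{1..4::nat}. (rtheta p \<alpha> r (u 1 - u r + real k) * rtheta p \<alpha> r (u 1 - v r - 1/2 + real k))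
                      / (rtheta p \<alpha> r (u 1 + real k) * rtheta p \<alpha> r (u 1 - 1/2 + real k))) > 0 \<and>
    (\<Prod>r\<in>{1..4::nat}. (rtheta p \<alpha> r (u 2 - u (pi2 r) + real k) * rtheta p \<alpha> r (u 2 - v (pi2 r) - 1/2 + real k))
                      / (rtheta p \<alpha> r (u 2 + real k) * rtheta p \<alpha> r (u 2 - 1/2 + real k))) > 0"
  proof (intro conjI ballI prod_pos divide_pos_pos mult_pos_pos)
    fix r :: nat assume r: "r \<in> {1..4}"
    show "rtheta p \<alpha> r (u 1 + real k) \<noteq> 0" "rtheta p \<alpha> r (u 1 - 1/2 + real k) \<noteq> 0"
         "rtheta p \<alpha> r (u 2 + real k) \<noteq> 0" "rtheta p \<alpha> r (u 2 - 1/2 + real k) \<noteq> 0"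
      using A[of r] by auto
    show "rtheta p \<alpha> r (u 1 + real k) > 0" "rtheta p \<alpha> r (u 1 - 1/2 + real k) > 0"
         "rtheta p \<alpha> r (u 2 + real k) > 0" "rtheta p \<alpha> r (u 2 - 1/2 + real k) > 0"
      using A[of r] by auto
    show "rtheta p \<alpha> r (u 1 - u r + real k) > 0" "rtheta p \<alpha> r (u 1 - v r - 1/2 + real k) > 0"
         "rtheta p \<alpha> r (u 2 - u (pi2 r) + real k) > 0" "rtheta p \<alpha> r (u 2 - v (pi2 r) - 1/2 + real k) > 0"
      by (rule P; use r14[OF r] u1 u2 kk in \<open>auto simp: S_def pi2_def abs_less_iff\<close>)+
  qed
qed

end
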